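(* In the setting described in the context, for every $\boldsymbol{x}\in\mathbb{Z}_+^2$, $\Gamma\subset\mathcal{D}_{\boldsymbol{x}}$, and hence $\mathcal{D}\subset\mathcal{D}_{\boldsymbol{x}}$.
   Context: Let $S_0=\{1,\dots,s_0\}$ be finite and $\{\boldsymbol{Y}_n\}$ a Markov chain on $\mathbb{S}=\mathbb{Z}^2\times S_0$ with $\mathbb{P}(\boldsymbol{Y}_{n+1}=(x_1+k,x_2+l,j')\mid\boldsymbol{Y}_n=(x_1,x_2,j))=[A_{k,l}]_{j,j'}$ for $k,l\in\{-1,0,1\}$ (no other transitions), $A_{k,l}$ nonnegative $s_0\times s_0$ with $\sum A_{k,l}$ stochastic. Let $\mathbb{S}_+=\mathbb{Z}_+^2\times S_0$, $P_+$ the restriction of the transition matrix to $\mathbb{S}_+$, $\tau=\inf\{n\ge0:\boldsymbol{Y}_n\notin\mathbb{S}_+\}$, $\tilde q_{\boldsymbol{y},\boldsymbol{y}'}=\mathbb{E}\big(\sum_{n=0}^{\tau-1}1(\boldsymbol{Y}_n=\boldsymbol{y}')\mid\boldsymbol{Y}_0=\boldsymbol{y}\big)$. With $\boldsymbol\pi_{*,*}$ the stationary distribution of $\sum A_{k,l}$, $a_1=\boldsymbol{\pi}_{*,*}\sum_l(A_{1,l}-A_{-1,l})\mathbf{1}$, $a_2=\boldsymbol{\pi}_{*,*}\sum_k(A_{k,1}-A_{k,-1})\mathbf{1}$. Standing assumptions: $\{\boldsymbol Y_n\}$ irreducible and aperiodic; $a_1<0$ or $a_2<0$; $P_+$ irreducible.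 $\Phi_{\boldsymbol{x}}(\theta_1,\theta_2)$ is the $s_0\times s_0$ matrix with $(j,j')$ entry $\sum_{k_1,k_2\ge0}e^{k_1\theta_1+k_2\theta_2}\tilde q_{(\boldsymbol{x},j),(k_1,k_2,j')}$; $\mathcal{D}_{\boldsymbol{x}}$ is the interior of $\{(\theta_1,\theta_2):\Phi_{\boldsymbol{x}}(\theta_1,\theta_2)<\infty\text{ elementwise}\}$. $A_{*,*}(\theta_1,\theta_2)=\sum_{k,l}e^{k\theta_1+l\theta_2}A_{k,l}$, $\Gamma=\{(\theta_1,\theta_2)\in\mathbb{R}^2:\mathrm{spr}(A_{*,*}(\theta_1,\theta_2))<1\}$ (spr = spectral radius), and $\mathcal{D}=\{(\theta_1,\theta_2)\in\mathbb{R}^2:\exists(\theta_1',\theta_2')\in\Gamma\text{ with }\theta_1<\theta_1',\ \theta_2<\theta_2'\}$. *)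

theory Defs
  imports "HOL-Analysis.Analysis"
begin

text \<open>States are triples (x1, x2, j) with x1 x2 integers and j a phase in the
finite type 'j (so s0 = CARD('j)).  The block matrices A k l (k,l in {-1,0,1})
are given as functions A k l j j'.  Values of A outside k,l in {-1,0,1} are irrelevant.\<close>

definition steps :: "int set" where "steps = {-1, 0, 1}"

text \<open>n-step transition probabilities of the chain on Z^2 x S0
(first-step decomposition of the n-th matrix power).\<close>
fun Pn :: "(int \<Rightarrow> int \<Rightarrow> 'j::finite \<Rightarrow> 'j \<Rightarrow> real) \<Rightarrow> nat
           \<Rightarrow> int \<times> int \<times> 'j \<Rightarrow> int \<times> int \<times> 'j \<Rightarrow> real" where
  "Pn A 0 y y' = (if y = y' then 1 else 0)"
| "Pn A (Suc n) (x1, x2, j) y' =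
     (\<Sum>k\<in>steps. \<Sum>l\<in>steps. \<Sum>i\<in>UNIV. A k l j i * Pn A n (x1 + k, x2 + l, i) y')"

definition Splus :: "(int \<times> int \<times> 'j) set" where
  "Splus = {(x1, x2, j). x1 \<ge> 0 \<and> x2 \<ge> 0}"

text \<open>Entries of the n-th power of P_+ (restriction of P to S_+);
for y in S_+, Qn A n y y' = P(Y_0,...,Y_n in S_+, Y_n = y' | Y_0 = y) = P(Y_n = y', n < tau | Y_0 = y).\<close>
fun Qn :: "(int \<Rightarrow> int \<Rightarrow> 'j::finite \<Rightarrow> 'j \<Rightarrow> real) \<Rightarrow> nat
           \<Rightarrow> int \<times> int \<times> 'j \<Rightarrow> int \<times> int \<times> 'j \<Rightarrow> real" where
  "Qn A 0 y y' = (if y = y' \<and> y \<in> Splus then 1 else 0)"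
| "Qn A (Suc n) (x1, x2, j) y' =
     (if (x1, x2, j) \<in> Splus then
       (\<Sum>k\<in>steps. \<Sum>l\<in>steps. \<Sum>i\<in>UNIV. A k l j i * Qn A n (x1 + k, x2 + l, i) y')
      else 0)"

text \<open>Expected number of visits to y' before leaving S_+:
 E(sum_{n<tau} 1(Y_n = y') | Y_0 = y) = sum_n P(Y_n = y', n < tau | Y_0 = y).\<close>
definition qtilde :: "(int \<Rightarrow> int \<Rightarrow> 'j::finite \<Rightarrow> 'j \<Rightarrow> real)
     \<Rightarrow> int \<times> int \<times> 'j \<Rightarrow> int \<times> int \<times> 'j \<Rightarrow> ennreal" where
  "qtilde A y y' = (\<Sum>n. ennreal (Qn A n y y'))"

definition Phi :: "(int \<Rightarrow> int \<Rightarrow> 'j::finite \<Rightarrow> 'j \<Rightarrow> real) \<Rightarrow> int \<times> int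
     \<Rightarrow> real \<times> real \<Rightarrow> 'j \<Rightarrow> 'j \<Rightarrow> ennreal" where
  "Phi A x \<theta> j j' =
     infsum (\<lambda>(k1::nat, k2::nat). ennreal (exp (real k1 * fst \<theta> + real k2 * snd \<theta>))
                * qtilde A (fst x, snd x, j) (int k1, int k2, j')) UNIV"

definition Dx :: "(int \<Rightarrow> int \<Rightarrow> 'j::finite \<Rightarrow> 'j \<Rightarrow> real) \<Rightarrow> int \<times> int \<Rightarrow> (real \<times> real) set" where
  "Dx A x = interior {\<theta>. \<forall>j j'. Phi A x \<theta> j j' < top}"

definition Astar :: "(int \<Rightarrow> int \<Rightarrow> 'j::finite \<Rightarrow> 'j \<Rightarrow> real) \<Rightarrow> real \<times> real \<Rightarrow> 'j \<Rightarrow> 'j \<Rightarrow> real" where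
  "Astar A \<theta> j j' = (\<Sum>k\<in>steps. \<Sum>l\<in>steps. exp (real_of_int k * fst \<theta> + real_of_int l * snd \<theta>) * A k l j j')"

definition spr :: "('j::finite \<Rightarrow> 'j \<Rightarrow> real) \<Rightarrow> real" where
  "spr M = Sup {cmod \<mu> | \<mu>. \<exists>v :: 'j \<Rightarrow> complex. (\<exists>i. v i \<noteq> 0) \<and>
                   (\<forall>i. (\<Sum>j\<in>UNIV. complex_of_real (M i j) * v j) = \<mu> * v i)}"

definition Gamma :: "(int \<Rightarrow> int \<Rightarrow> 'j::finite \<Rightarrow> 'j \<Rightarrow> real) \<Rightarrow> (real \<times> real) set" where
  "Gamma A = {\<theta>. spr (Astar A \<theta>) < 1}"

definition Dset :: "(int \<Rightarrow> int \<Rightarrow> 'j::finite \<Rightarrow> 'j \<Rightarrow> real) \<Rightarrow> (real \<times> real) set" where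
  "Dset A = {\<theta>. \<exists>\<theta>'\<in>Gamma A. fst \<theta> < fst \<theta>' \<and> snd \<theta> < snd \<theta>'}"

end

theory Submission
  imports Defs "Jordan_Normal_Form.Spectral_Radius"
begin

fun mpow :: "('j::finite \<Rightarrow> 'j \<Rightarrow> real) \<Rightarrow> nat \<Rightarrow> 'j \<Rightarrow> 'j \<Rightarrow> real" where
  "mpow M 0 i j = (if i = j then 1 else 0)"
| "mpow M (Suc n) i j = (\<Sum>l\<in>UNIV. mpow M n i l * M l j)"

lemma spr_eig_bdd:
  fixes M :: "'j::finite \<Rightarrow> 'j \<Rightarrow> real"
  assumes "\<forall>i. (\<Sum>j\<in>UNIV. complex_of_real (M i j) * w j) = \<mu> * w i" and "w i1 \<noteq> 0"
  shows "cmod \<mu> \<le> (\<Sum>i\<in>UNIV. \<Sum>j\<in>UNIV. \<bar>M i j\<bar>)"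
proof -
  define m where "m = Max (range (\<lambda>i. cmod (w i)))"
  have "m \<in> range (\<lambda>i. cmod (w i))" unfolding m_def by (rule Max_in) auto
  then obtain i0 where i0: "m = cmod (w i0)" by auto
  have le: "cmod (w i) \<le> cmod (w i0)" for i unfolding i0[symmetric] m_def by (rule Max_ge) auto
  have pos: "cmod (w i0) > 0" using le[of i1] assms(2) by auto
  have "cmod \<mu> * cmod (w i0) = cmod (\<Sum>j\<in>UNIV. complex_of_real (M i0 j) * w j)"
    using assms(1) by (simp add: norm_mult)
  also have "\<dots> \<le> (\<Sum>j\<in>UNIV. cmod (complex_of_real (M i0 j) * w j))" by (rule norm_sum)
  also have "\<dots> \<le> (\<Sum>j\<in>UNIV. \<bar>M i0 j\<bar> * cmod (w i0))"
    by (rule sum_mono) (simp add: norm_mult mult_left_mono le)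
  also have "\<dots> = (\<Sum>j\<in>UNIV. \<bar>M i0 j\<bar>) * cmod (w i0)" by (simp add: sum_distrib_right)
  finally have "cmod \<mu> \<le> (\<Sum>j\<in>UNIV. \<bar>M i0 j\<bar>)" using pos by simp
  also have "\<dots> \<le> (\<Sum>i\<in>UNIV. \<Sum>j\<in>UNIV. \<bar>M i j\<bar>)"
    by (rule member_le_sum[where f = "\<lambda>i. \<Sum>j\<in>UNIV. \<bar>M i j\<bar>"]) (auto intro: sum_nonneg)
  finally show ?thesis .
qed

lemma spr_pow_bound:
  fixes M :: "'j::finite \<Rightarrow> 'j \<Rightarrow> real"
  assumes spr: "spr M < 1"
  shows "\<exists>C r. 0 < r \<and> r < 1 \<and> (\<forall>n i j. \<bar>mpow M n i j\<bar> \<le> C * r ^ n)"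
proof -
  define N where "N = CARD('j)"
  have N0: "N > 0" unfolding N_def by simp
  obtain h where h: "bij_betw h {0..<N} (UNIV :: 'j set)"
    using ex_bij_betw_nat_finite[of "UNIV :: 'j set"] unfolding N_def by auto
  define g where "g = inv_into {0..<N} h"
  have hg: "h (g i) = i" for i using h unfolding g_def by (meson UNIV_I bij_betw_inv_into_right)
  have gN: "g i < N" for i
  proof -
    have "i \<in> h ` {0..<N}" using h by (simp add: bij_betw_def)
    from inv_into_into[OF this] show ?thesis unfolding g_def by simp
  qed
  have gh: "a < N \<Longrightarrow> g (h a) = a" for a using h unfolding g_def
    by (simp add: bij_betw_inv_into_left)
  have hinj: "a < N \<Longrightarrow> b < N \<Longrightarrow> h a = h b \<longleftrightarrow> a = b" for a b
    using gh by metis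
  have reidx: "(\<Sum>c<N. f (h c)) = (\<Sum>l\<in>UNIV. f l)" for f :: "'j \<Rightarrow> 'b::comm_monoid_add"
    using sum.reindex_bij_betw[OF h, of f] by (simp add: atLeast0LessThan)
  define s where "s = spr M"
  define r where "r = (max s 0 + 1) / 2"
  have r0: "0 < r" and r1: "r < 1" and rs: "s < r" using spr unfolding r_def s_def by auto
  define B where "B = mat N N (\<lambda>(a,b). complex_of_real (M (h a) (h b) / r))"
  have Bc: "B \<in> carrier_mat N N" unfolding B_def by simp
  have ev_lt: "cmod \<mu> < 1" if ev: "\<mu> \<in> spectrum B" for \<mu>
  proof -
    from ev obtain v where v: "v \<in> carrier_vec N" "v \<noteq> 0\<^sub>v N" "B *\<^sub>v v = \<mu> \<cdot>\<^sub>v v"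
      unfolding spectrum_def eigenvalue_def eigenvector_def B_def by auto
    define w where "w i = v $ g i" for i
    have dv: "dim_vec v = N" using v by auto
    obtain a where a: "a < N" "v $ a \<noteq> 0" using v(2) dv by (metis eq_vecI index_zero_vec(1,2))
    have wne: "w (h a) \<noteq> 0" unfolding w_def using gh[OF a(1)] a by simp
    have eq: "(\<Sum>j\<in>UNIV. complex_of_real (M i j) * w j) = (complex_of_real r * \<mu>) * w i" for i
    proof -
      have "(B *\<^sub>v v) $ g i = (\<mu> \<cdot>\<^sub>v v) $ g i" using v(3) by simp
      hence "(\<Sum>c<N. complex_of_real (M (h (g i)) (h c) / r) * v $ c) = \<mu> * v $ g i"
        using gN[of i] dv unfolding B_def
        by (simp add: mult_mat_vec_def scalar_prod_def row_def atLeast0LessThan)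
      hence "(\<Sum>c<N. complex_of_real (M i (h c) / r) * w (h c)) = \<mu> * w i"
        unfolding w_def hg using gh by (simp add: atLeast0LessThan)
      hence "(\<Sum>l\<in>UNIV. complex_of_real (M i l / r) * w l) = \<mu> * w i"
        using reidx[of "\<lambda>l. complex_of_real (M i l / r) * w l"] by simp
      hence "(\<Sum>l\<in>UNIV. complex_of_real (M i l) * w l) / complex_of_real r = \<mu> * w i"
        by (simp add: sum_divide_distrib)
      thus ?thesis using r0 by (simp add: field_simps)
    qed
    let ?S = "{cmod \<mu> | \<mu>. \<exists>v :: 'j \<Rightarrow> complex. (\<exists>i. v i \<noteq> 0) \<and>
                   (\<forall>i. (\<Sum>j\<in>UNIV. complex_of_real (M i j) * v j) = \<mu> * v i)}"
    have mem: "cmod (complex_of_real r * \<mu>) \<in> ?S" using eq wne by blast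
    have bdd: "bdd_above ?S"
      by (rule bdd_aboveI[where M = "\<Sum>i\<in>UNIV. \<Sum>j\<in>UNIV. \<bar>M i j\<bar>"]) (auto intro: spr_eig_bdd)
    have "cmod (complex_of_real r * \<mu>) \<le> s" unfolding s_def spr_def
      by (rule cSup_upper[OF mem bdd])
    hence le: "r * cmod \<mu> \<le> s" using r0 by (simp add: norm_mult)
    show ?thesis
    proof (rule ccontr)
      assume "\<not> cmod \<mu> < 1"
      hence "r * 1 \<le> r * cmod \<mu>" using r0 by (intro mult_left_mono) auto
      thus False using le rs by simp
    qed
  qed
  have "spectral_radius B < 1"
    unfolding spectral_radius_def
    using card_finite_spectrum(1)[OF Bc] spectrum_non_empty[OF Bc N0] ev_lt
    by (subst Max_less_iff) auto
  from spectral_radius_jnf_norm_bound_less_1_upper_triangular[OF Bc this]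
  obtain c where c: "\<And>k. norm_bound (B ^\<^sub>m k) c" by auto
  have pw: "a < N \<Longrightarrow> b < N \<Longrightarrow> (B ^\<^sub>m k) $$ (a,b) = complex_of_real (mpow M k (h a) (h b) / r ^ k)" for k a b
  proof (induction k arbitrary: b)
    case 0
    then show ?case using Bc hinj by auto
  next
    case (Suc k)
    have "(B ^\<^sub>m Suc k) $$ (a,b) = (\<Sum>c<N. (B ^\<^sub>m k) $$ (a,c) * B $$ (c,b))"
      using Suc.prems Bc by (simp add: scalar_prod_def atLeast0LessThan)
    also have "\<dots> = (\<Sum>c<N. complex_of_real (mpow M k (h a) (h c) * M (h c) (h b) / r ^ Suc k))"
      using Suc B_def by (intro sum.cong) auto
    also have "\<dots> = (\<Sum>l\<in>UNIV. complex_of_real (mpow M k (h a) l * M l (h b) / r ^ Suc k))"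
      by (rule reidx)
    also have "\<dots> = complex_of_real (mpow M (Suc k) (h a) (h b) / r ^ Suc k)"
      by (simp add: sum_divide_distrib)
    finally show ?case .
  qed
  have "\<bar>mpow M n i j\<bar> \<le> c * r ^ n" for n i j
  proof -
    have "norm ((B ^\<^sub>m n) $$ (g i, g j)) \<le> c" using c[of n] gN Bc unfolding norm_bound_def by auto
    hence "norm (complex_of_real (mpow M n i j / r ^ n)) \<le> c" using pw[OF gN gN, of n i j] hg by metis
    hence "\<bar>mpow M n i j / r ^ n\<bar> \<le> c" by (simp only: norm_of_real)
    thus ?thesis using r0 by (simp add: abs_div pos_divide_le_eq)
  qed
  thus ?thesis using r0 r1 by blast
qed

lemma ifm1: "(if c then 1 else 0) * (x::real) = (if c then x else 0)" by simp
lemma ifm2: "(x::real) * (if c then 1 else 0) = (if c then x else 0)" by simp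

lemma mpow_left: "mpow M (Suc n) i j = (\<Sum>l\<in>UNIV. M i l * mpow M n l j)"
proof (induction n arbitrary: i j)
  case 0
  then show ?case by (simp add: ifm1 ifm2 sum.delta sum.delta')
next
  case (Suc n)
  have "mpow M (Suc (Suc n)) i j = (\<Sum>l\<in>UNIV. (\<Sum>m\<in>UNIV. M i m * mpow M n m l) * M l j)"
    using Suc by simp
  also have "\<dots> = (\<Sum>l\<in>UNIV. \<Sum>m\<in>UNIV. M i m * (mpow M n m l * M l j))"
    by (simp add: sum_distrib_right mult.assoc)
  also have "\<dots> = (\<Sum>m\<in>UNIV. \<Sum>l\<in>UNIV. M i m * (mpow M n m l * M l j))"
    by (rule sum.swap)
  also have "\<dots> = (\<Sum>m\<in>UNIV. M i m * mpow M (Suc n) m j)"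
    by (simp add: sum_distrib_left)
  finally show ?case .
qed

lemma mpow_nonneg: assumes "\<And>i j. M i j \<ge> 0" shows "mpow M n i j \<ge> 0"
  by (induction n arbitrary: i j) (auto intro!: sum_nonneg simp: assms)

lemma exists_v:
  fixes M :: "'j::finite \<Rightarrow> 'j \<Rightarrow> real"
  assumes nn: "\<And>i j. M i j \<ge> 0" and spr: "spr M < 1"
  shows "\<exists>v \<rho>0. (\<forall>i. v i \<ge> 1) \<and> 0 < \<rho>0 \<and> \<rho>0 < 1 \<and> (\<forall>i. (\<Sum>j\<in>UNIV. M i j * v j) \<le> \<rho>0 * v i)"
proof -
  obtain C r where r: "0 < r" "r < 1" and Cb: "\<And>n i j. \<bar>mpow M n i j\<bar> \<le> C * r ^ n"
    using spr_pow_bound[OF spr] by blast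
  define a where "a n i = (\<Sum>j\<in>UNIV. mpow M n i j)" for n i
  have a0: "a n i \<ge> 0" for n i unfolding a_def by (rule sum_nonneg) (rule mpow_nonneg[of M, OF nn])
  have suma: "summable (\<lambda>n. a n i)" for i
  proof (rule summable_comparison_test')
    show "summable (\<lambda>n. real CARD('j) * C * r ^ n)"
      using r by (intro summable_mult summable_geometric) auto
    fix n :: nat
    have "norm (a n i) \<le> (\<Sum>j\<in>UNIV. \<bar>mpow M n i j\<bar>)" unfolding a_def
      by (simp add: sum_abs)
    also have "\<dots> \<le> (\<Sum>j\<in>(UNIV::'j set). C * r ^ n)" by (rule sum_mono) (rule Cb)
    finally show "norm (a n i) \<le> real CARD('j) * C * r ^ n" by simp
  qed
  define v where "v i = (\<Sum>n. a n i)" for i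
  have aa0: "a 0 i = 1" for i unfolding a_def by simp
  have v1: "v i \<ge> 1" for i
  proof -
    have "sum (\<lambda>n. a n i) {0} \<le> v i" unfolding v_def
      by (rule sum_le_suminf[OF suma]) (auto intro: a0)
    thus ?thesis using aa0 by simp
  qed
  have Mv: "(\<Sum>j\<in>UNIV. M i j * v j) = v i - 1" for i
  proof -
    have "(\<Sum>j\<in>UNIV. M i j * v j) = (\<Sum>j\<in>UNIV. \<Sum>n. M i j * a n j)"
      unfolding v_def by (simp add: suminf_mult[OF suma])
    also have "\<dots> = (\<Sum>n. \<Sum>j\<in>UNIV. M i j * a n j)"
      by (rule suminf_sum[symmetric]) (intro summable_mult suma)
    also have "\<dots> = (\<Sum>n. a (Suc n) i)"
    proof (rule suminf_cong)
      fix n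
      have "(\<Sum>j\<in>UNIV. M i j * a n j) = (\<Sum>j\<in>UNIV. \<Sum>l\<in>UNIV. M i j * mpow M n j l)"
        unfolding a_def by (simp add: sum_distrib_left)
      also have "\<dots> = (\<Sum>l\<in>UNIV. \<Sum>j\<in>UNIV. M i j * mpow M n j l)" by (rule sum.swap)
      also have "\<dots> = a (Suc n) i" unfolding a_def by (rule sum.cong[OF refl], rule mpow_left[symmetric])
      finally show "(\<Sum>j\<in>UNIV. M i j * a n j) = a (Suc n) i" .
    qed
    also have "\<dots> = v i - 1" unfolding v_def using suminf_split_head[OF suma] aa0 by simp
    finally show ?thesis .
  qed
  define V where "V = (\<Sum>i\<in>UNIV. v i)"
  have vV: "v i \<le> V" for i unfolding V_def
    by (rule member_le_sum) (use v1 in \<open>auto intro: order_trans[OF zero_le_one]\<close>)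
  have V1: "V \<ge> 1" using vV v1 order_trans by blast
  define \<rho>0 where "\<rho>0 = 1 - 1 / (2 * V)"
  have "0 < \<rho>0" "\<rho>0 < 1" unfolding \<rho>0_def using V1 by (auto simp: field_simps)
  moreover have "(\<Sum>j\<in>UNIV. M i j * v j) \<le> \<rho>0 * v i" for i
  proof -
    have "v i / (2 * V) \<le> 1" using vV[of i] V1 by (simp add: field_simps)
    thus ?thesis unfolding Mv \<rho>0_def by (simp add: algebra_simps)
  qed
  ultimately show ?thesis using v1 by blast
qed

lemma Astar_near:
  assumes nn: "\<And>k l j j'. A k l j j' \<ge> 0"
    and d1: "\<bar>fst \<eta> - fst \<theta>\<bar> \<le> d" and d2: "\<bar>snd \<eta> - snd \<theta>\<bar> \<le> d"
  shows "Astar A \<eta> i j \<le> exp (2 * d) * Astar A \<theta> i j"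
  unfolding Astar_def sum_distrib_left
proof (intro sum_mono)
  fix k l assume k: "k \<in> steps" and l: "l \<in> steps"
  have "real_of_int k * (fst \<eta> - fst \<theta>) \<le> d" using k d1 unfolding steps_def by (auto simp: abs_le_iff)
  moreover have "real_of_int l * (snd \<eta> - snd \<theta>) \<le> d" using l d2 unfolding steps_def by (auto simp: abs_le_iff)
  ultimately have "real_of_int k * fst \<eta> + real_of_int l * snd \<eta> \<le> 2 * d + (real_of_int k * fst \<theta> + real_of_int l * snd \<theta>)"
    by (simp add: algebra_simps)
  hence "exp (real_of_int k * fst \<eta> + real_of_int l * snd \<eta>) \<le> exp (2 * d) * exp (real_of_int k * fst \<theta> + real_of_int l * snd \<theta>)"
    by (simp add: exp_add[symmetric])
  thus "exp (real_of_int k * fst \<eta> + real_of_int l * snd \<eta>) * A k l i j \<le> exp (2 * d) * (exp (real_of_int k * fst \<theta> + real_of_int l * snd \<theta>) * A k l i j)"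
    using nn[of k l i j] by (simp add: mult_right_mono mult.assoc[symmetric])
qed

lemma Astar_nonneg: "(\<And>k l j j'. A k l j j' \<ge> 0) \<Longrightarrow> Astar A \<theta> i j \<ge> 0"
  unfolding Astar_def by (auto intro!: sum_nonneg)

lemma Qn_nonneg: "(\<And>k l j j'. A k l j j' \<ge> 0) \<Longrightarrow> Qn A n y y' \<ge> 0"
  by (induction A n y y' rule: Qn.induct) (auto intro!: sum_nonneg mult_nonneg_nonneg)

lemma regroup:
  fixes A :: "int \<Rightarrow> int \<Rightarrow> 'j::finite \<Rightarrow> 'j \<Rightarrow> real"
  shows "(\<Sum>k\<in>steps. \<Sum>l\<in>steps. \<Sum>i\<in>UNIV. A k l j i *
      (exp (real_of_int (x1 + k) * e1 + real_of_int (x2 + l) * e2) * c * v i))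
    = exp (real_of_int x1 * e1 + real_of_int x2 * e2) * c * (\<Sum>i\<in>UNIV. Astar A (e1, e2) j i * v i)"
proof -
  have "(\<Sum>k\<in>steps. \<Sum>l\<in>steps. \<Sum>i\<in>UNIV. A k l j i *
      (exp (real_of_int (x1 + k) * e1 + real_of_int (x2 + l) * e2) * c * v i))
    = (\<Sum>k\<in>steps. \<Sum>l\<in>steps. \<Sum>i\<in>UNIV. exp (real_of_int x1 * e1 + real_of_int x2 * e2) * c *
        (exp (real_of_int k * e1 + real_of_int l * e2) * A k l j i * v i))"
    by (intro sum.cong refl) (simp add: algebra_simps exp_add[symmetric])
  also have "\<dots> = exp (real_of_int x1 * e1 + real_of_int x2 * e2) * c *
      (\<Sum>k\<in>steps. \<Sum>l\<in>steps. \<Sum>i\<in>UNIV. exp (real_of_int k * e1 + real_of_int l * e2) * A k l j i * v i)"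
    by (simp add: sum_distrib_left)
  also have "(\<Sum>k\<in>steps. \<Sum>l\<in>steps. \<Sum>i\<in>UNIV. exp (real_of_int k * e1 + real_of_int l * e2) * A k l j i * v i)
     = (\<Sum>i\<in>UNIV. Astar A (e1, e2) j i * v i)"
    unfolding Astar_def sum_distrib_right
    by (simp only: sum.swap[of _ UNIV] fst_conv snd_conv)
  finally show ?thesis .
qed

lemma Qn_bound:
  fixes A :: "int \<Rightarrow> int \<Rightarrow> 'j::finite \<Rightarrow> 'j \<Rightarrow> real"
  assumes nn: "\<And>k l j j'. A k l j j' \<ge> 0" and v1: "\<And>i. v i \<ge> 1" and \<rho>: "\<rho> \<ge> 0"
    and Mv: "\<And>i. (\<Sum>j\<in>UNIV. Astar A (e1, e2) i j * v j) \<le> \<rho> * v i"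
    and F: "finite F"
  shows "(\<Sum>p\<in>F. exp (real (fst p) * e1 + real (snd p) * e2) * Qn A n (x1, x2, j) (int (fst p), int (snd p), j'))
     \<le> exp (real_of_int x1 * e1 + real_of_int x2 * e2) * \<rho> ^ n * v j"
proof (induction n arbitrary: x1 x2 j)
  case 0
  let ?E = "exp (real_of_int x1 * e1 + real_of_int x2 * e2)"
  have "(\<Sum>p\<in>F. exp (real (fst p) * e1 + real (snd p) * e2) * Qn A 0 (x1, x2, j) (int (fst p), int (snd p), j'))
     \<le> (\<Sum>p\<in>F. if (nat x1, nat x2) = p then ?E else 0)"
  proof (rule sum_mono)
    fix p assume "p \<in> F"
    obtain a b where p: "p = (a, b)" by force
    show "exp (real (fst p) * e1 + real (snd p) * e2) * Qn A 0 (x1, x2, j) (int (fst p), int (snd p), j')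
       \<le> (if (nat x1, nat x2) = p then ?E else 0)"
      using p by auto
  qed
  also have "\<dots> \<le> ?E" using F by (simp add: sum.delta)
  also have "\<dots> \<le> ?E * \<rho> ^ 0 * v j" using v1[of j] by simp
  finally show ?case .
next
  case (Suc n)
  let ?E = "\<lambda>p. exp (real (fst p) * e1 + real (snd p) * e2)"
  show ?case
  proof (cases "(x1, x2, j) \<in> Splus")
    case False
    have "0 \<le> exp (real_of_int x1 * e1 + real_of_int x2 * e2) * \<rho> ^ Suc n * v j"
      using v1[of j] \<rho> by (intro mult_nonneg_nonneg) (auto intro: order_trans[OF zero_le_one])
    then show ?thesis using False by simp
  next
    case True
    have "(\<Sum>p\<in>F. ?E p * Qn A (Suc n) (x1, x2, j) (int (fst p), int (snd p), j'))
      = (\<Sum>p\<in>F. \<Sum>k\<in>steps. \<Sum>l\<in>steps. \<Sum>i\<in>UNIV. A k l j i * (?E p * Qn A n (x1 + k, x2 + l, i) (int (fst p), int (snd p), j')))"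
      using True by (simp add: sum_distrib_left mult_ac)
    also have "\<dots> = (\<Sum>k\<in>steps. \<Sum>l\<in>steps. \<Sum>i\<in>UNIV. A k l j i * (\<Sum>p\<in>F. ?E p * Qn A n (x1 + k, x2 + l, i) (int (fst p), int (snd p), j')))"
      by (simp only: sum_distrib_left sum.swap[of _ F])
    also have "\<dots> \<le> (\<Sum>k\<in>steps. \<Sum>l\<in>steps. \<Sum>i\<in>UNIV. A k l j i *
      (exp (real_of_int (x1 + k) * e1 + real_of_int (x2 + l) * e2) * \<rho> ^ n * v i))"
      by (intro sum_mono mult_left_mono Suc.IH nn)
    also have "\<dots> = exp (real_of_int x1 * e1 + real_of_int x2 * e2) * \<rho> ^ n * (\<Sum>i\<in>UNIV. Astar A (e1, e2) j i * v i)"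
      by (rule regroup)
    also have "\<dots> \<le> exp (real_of_int x1 * e1 + real_of_int x2 * e2) * \<rho> ^ n * (\<rho> * v j)"
      using \<rho> by (intro mult_left_mono Mv) auto
    finally show ?thesis by (simp add: mult_ac)
  qed
qed

lemma Phi_bound:
  fixes A :: "int \<Rightarrow> int \<Rightarrow> 'j::finite \<Rightarrow> 'j \<Rightarrow> real"
  assumes nn: "\<And>k l j j'. A k l j j' \<ge> 0" and v1: "\<And>i. v i \<ge> 1" and \<rho>: "\<rho> \<ge> 0" "\<rho> < 1"
    and Mv: "\<And>i. (\<Sum>j\<in>UNIV. Astar A (e1, e2) i j * v j) \<le> \<rho> * v i"
  shows "Phi A (x1, x2) (e1, e2) j j' \<le> ennreal (exp (real_of_int x1 * e1 + real_of_int x2 * e2) * v j / (1 - \<rho>))"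
proof -
  let ?E = "\<lambda>p. exp (real (fst p) * e1 + real (snd p) * e2)"
  let ?Q = "\<lambda>n p. Qn A n (x1, x2, j) (int (fst p), int (snd p), j')"
  let ?X = "exp (real_of_int x1 * e1 + real_of_int x2 * e2)"
  define f where "f = (\<lambda>p. ennreal (?E p) * (\<Sum>n. ennreal (?Q n p)))"
  have Phi_eq: "Phi A (x1, x2) (e1, e2) j j' = infsum f UNIV"
    unfolding Phi_def qtilde_def f_def by (rule infsum_cong) (simp add: case_prod_beta)
  also have "\<dots> = (SUP F\<in>{F. finite F \<and> F \<subseteq> UNIV}. sum f F)"
    by (rule nonneg_infsum_complete) simp
  also have "\<dots> \<le> ennreal (?X * v j / (1 - \<rho>))"
  proof (rule SUP_least)
    fix F assume "F \<in> {F. finite F \<and> F \<subseteq> (UNIV :: (nat \<times> nat) set)}"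
    hence F: "finite F" by simp
    have "sum f F = (\<Sum>p\<in>F. \<Sum>n. ennreal (?E p * ?Q n p))"
      unfolding f_def
    proof (intro sum.cong refl)
      fix p
      have "ennreal (?E p) * (\<Sum>n. ennreal (?Q n p)) = (\<Sum>n. ennreal (?E p) * ennreal (?Q n p))"
        by (rule ennreal_suminf_cmult[symmetric])
      also have "\<dots> = (\<Sum>n. ennreal (?E p * ?Q n p))"
        by (intro suminf_cong ennreal_mult'[symmetric]) simp
      finally show "ennreal (?E p) * (\<Sum>n. ennreal (?Q n p)) = (\<Sum>n. ennreal (?E p * ?Q n p))" .
    qed
    also have "\<dots> = (\<Sum>n. \<Sum>p\<in>F. ennreal (?E p * ?Q n p))"
      by (rule suminf_sum[symmetric]) simp
    also have "\<dots> = (\<Sum>n. ennreal (\<Sum>p\<in>F. ?E p * ?Q n p))"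
      by (intro suminf_cong sum_ennreal) (simp add: Qn_nonneg nn)
    also have "\<dots> \<le> (\<Sum>n. ennreal (?X * v j * \<rho> ^ n))"
    proof (rule suminf_le)
      fix n
      show "ennreal (\<Sum>p\<in>F. ?E p * ?Q n p) \<le> ennreal (?X * v j * \<rho> ^ n)"
        using Qn_bound[OF nn v1 \<rho>(1) Mv F, of n x1 x2 j j'] by (intro ennreal_leI) (simp add: mult_ac)
    qed simp_all
    also have "\<dots> = ennreal (\<Sum>n. ?X * v j * \<rho> ^ n)"
    proof (rule suminf_ennreal2)
      show "summable (\<lambda>n. ?X * v j * \<rho> ^ n)" using \<rho> by (intro summable_mult summable_geometric) auto
      fix n show "0 \<le> ?X * v j * \<rho> ^ n" using v1[of j] \<rho> by (intro mult_nonneg_nonneg) auto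
    qed
    also have "(\<Sum>n. ?X * v j * \<rho> ^ n) = ?X * v j / (1 - \<rho>)"
      using \<rho> by (simp add: suminf_mult summable_geometric suminf_geometric)
    finally show "sum f F \<le> ennreal (?X * v j / (1 - \<rho>))" .
  qed
  finally show ?thesis .
qed

lemma Phi_mono:
  assumes "fst \<eta> \<le> fst \<theta>" "snd \<eta> \<le> snd \<theta>"
  shows "Phi A x \<eta> j j' \<le> Phi A x \<theta> j j'"
  unfolding Phi_def
proof (rule infsum_mono)
  fix p :: "nat \<times> nat"
  obtain a b where p: "p = (a, b)" by force
  have "real a * fst \<eta> + real b * snd \<eta> \<le> real a * fst \<theta> + real b * snd \<theta>"
    using assms by (intro add_mono mult_left_mono) auto
  hence "ennreal (exp (real a * fst \<eta> + real b * snd \<eta>)) \<le> ennreal (exp (real a * fst \<theta> + real b * snd \<theta>))"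
    by (intro ennreal_leI) simp
  thus "(case p of (k1, k2) \<Rightarrow> ennreal (exp (real k1 * fst \<eta> + real k2 * snd \<eta>)) * qtilde A (fst x, snd x, j) (int k1, int k2, j'))
    \<le> (case p of (k1, k2) \<Rightarrow> ennreal (exp (real k1 * fst \<theta> + real k2 * snd \<theta>)) * qtilde A (fst x, snd x, j) (int k1, int k2, j'))"
    unfolding p by (simp add: mult_right_mono)
next
  show "(\<lambda>(k1, k2). ennreal (exp (real k1 * fst \<eta> + real k2 * snd \<eta>)) * qtilde A (fst x, snd x, j) (int k1, int k2, j')) summable_on UNIV"
    by (rule nonneg_summable_on_complete) simp
next
  show "(\<lambda>(k1, k2). ennreal (exp (real k1 * fst \<theta> + real k2 * snd \<theta>)) * qtilde A (fst x, snd x, j) (int k1, int k2, j')) summable_on UNIV"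
    by (rule nonneg_summable_on_complete) simp
qed

lemma Gamma_nbhd:
  fixes A :: "int \<Rightarrow> int \<Rightarrow> 'j::finite \<Rightarrow> 'j \<Rightarrow> real"
  assumes nn: "\<And>k l j j'. A k l j j' \<ge> 0" and th: "\<theta> \<in> Gamma A"
  shows "\<exists>d>0. ball \<theta> d \<subseteq> {\<eta>. \<forall>j j'. Phi A (x1, x2) \<eta> j j' < Orderings.top}"
proof -
  have "spr (Astar A \<theta>) < 1" using th unfolding Gamma_def by simp
  from exists_v[OF Astar_nonneg[of A, OF nn] this]
  obtain v \<rho>0 where v1: "\<And>i. v i \<ge> 1" and r0: "0 < \<rho>0" "\<rho>0 < 1"
    and Mv0: "\<And>i. (\<Sum>j\<in>UNIV. Astar A \<theta> i j * v j) \<le> \<rho>0 * v i" by blast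
  define d where "d = - ln \<rho>0 / 4"
  have d0: "d > 0" unfolding d_def using r0 by simp
  define \<rho> where "\<rho> = exp (2 * d) * \<rho>0"
  have \<rho>0: "\<rho> \<ge> 0" unfolding \<rho>_def using r0 by simp
  have "\<rho> = exp (2 * d + ln \<rho>0)" unfolding \<rho>_def using r0 by (simp add: exp_add)
  also have "\<dots> < 1" unfolding d_def using r0 by simp
  finally have \<rho>1: "\<rho> < 1" .
  have "ball \<theta> d \<subseteq> {\<eta>. \<forall>j j'. Phi A (x1, x2) \<eta> j j' < Orderings.top}"
  proof
    fix \<eta> assume "\<eta> \<in> ball \<theta> d"
    hence dd: "dist \<eta> \<theta> < d" by (simp add: dist_commute)
    have d1: "\<bar>fst \<eta> - fst \<theta>\<bar> \<le> d" using dist_fst_le[of \<eta> \<theta>] dd by (simp add: dist_real_def)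
    have d2: "\<bar>snd \<eta> - snd \<theta>\<bar> \<le> d" using dist_snd_le[of \<eta> \<theta>] dd by (simp add: dist_real_def)
    obtain e1 e2 where e: "\<eta> = (e1, e2)" by force
    have Mv: "(\<Sum>j\<in>UNIV. Astar A (e1, e2) i j * v j) \<le> \<rho> * v i" for i
    proof -
      have "(\<Sum>j\<in>UNIV. Astar A (e1, e2) i j * v j) \<le> (\<Sum>j\<in>UNIV. exp (2 * d) * Astar A \<theta> i j * v j)"
        using Astar_near[OF nn d1 d2] v1 e
        by (intro sum_mono mult_right_mono) (auto intro: order_trans[OF zero_le_one])
      also have "\<dots> = exp (2 * d) * (\<Sum>j\<in>UNIV. Astar A \<theta> i j * v j)"
        by (simp add: sum_distrib_left mult.assoc)
      also have "\<dots> \<le> exp (2 * d) * (\<rho>0 * v i)" by (intro mult_left_mono Mv0) simp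
      finally show ?thesis unfolding \<rho>_def by (simp add: mult.assoc)
    qed
    show "\<eta> \<in> {\<eta>. \<forall>j j'. Phi A (x1, x2) \<eta> j j' < Orderings.top}"
      unfolding e by (auto intro: le_less_trans[OF Phi_bound[OF nn v1 \<rho>0 \<rho>1 Mv]] simp: ennreal_less_top)
  qed
  thus ?thesis using d0 by blast
qed

theorem lemma4p3:
  fixes A :: "int \<Rightarrow> int \<Rightarrow> 'j::finite \<Rightarrow> 'j \<Rightarrow> real"
    and \<pi> :: "'j \<Rightarrow> real"
  assumes nonneg: "\<And>k l j j'. A k l j j' \<ge> 0"
    and stoch: "\<And>j. (\<Sum>k\<in>steps. \<Sum>l\<in>steps. \<Sum>j'\<in>UNIV. A k l j j') = 1"
    and irred: "\<And>y y'. \<exists>n. Pn A n y y' > 0"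
    and aper: "\<And>y. Gcd {n. n > 0 \<and> Pn A n y y > 0} = 1"
    and pi_nonneg: "\<And>j. \<pi> j \<ge> 0"
    and pi_sum: "(\<Sum>j\<in>UNIV. \<pi> j) = 1"
    and pi_stat: "\<And>j'. (\<Sum>j\<in>UNIV. \<pi> j * (\<Sum>k\<in>steps. \<Sum>l\<in>steps. A k l j j')) = \<pi> j'"
    and drift: "(\<Sum>j\<in>UNIV. \<pi> j * (\<Sum>l\<in>steps. \<Sum>j'\<in>UNIV. A 1 l j j' - A (-1) l j j')) < 0
              \<or> (\<Sum>j\<in>UNIV. \<pi> j * (\<Sum>k\<in>steps. \<Sum>j'\<in>UNIV. A k 1 j j' - A k (-1) j j')) < 0"
    and Pplus_irred: "\<And>y y'. y \<in> Splus \<Longrightarrow> y' \<in> Splus \<Longrightarrow> \<exists>n. Qn A n y y' > 0"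
  shows "\<forall>x1 x2 :: int. x1 \<ge> 0 \<longrightarrow> x2 \<ge> 0 \<longrightarrow>
           Gamma A \<subseteq> Dx A (x1, x2) \<and> Dset A \<subseteq> Dx A (x1, x2)"
proof (intro allI impI)
  fix x1 x2 :: int
  assume "x1 \<ge> 0" "x2 \<ge> 0"
  let ?S = "{\<eta>. \<forall>j j'. Phi A (x1, x2) \<eta> j j' < Orderings.top}"
  have G: "Gamma A \<subseteq> Dx A (x1, x2)"
  proof
    fix \<theta> assume "\<theta> \<in> Gamma A"
    from Gamma_nbhd[OF nonneg this, of x1 x2] obtain d where "d > 0" "ball \<theta> d \<subseteq> ?S" by blast
    thus "\<theta> \<in> Dx A (x1, x2)" unfolding Dx_def mem_interior by blast
  qed
  have "Dset A \<subseteq> Dx A (x1, x2)"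
  proof
    fix \<theta> assume "\<theta> \<in> Dset A"
    then obtain \<theta>' where th': "\<theta>' \<in> Gamma A" and lt: "fst \<theta> < fst \<theta>'" "snd \<theta> < snd \<theta>'"
      unfolding Dset_def by blast
    from Gamma_nbhd[OF nonneg th', of x1 x2] obtain d0 where d0: "d0 > 0" "ball \<theta>' d0 \<subseteq> ?S" by blast
    have fin: "\<theta>' \<in> ?S" using d0 centre_in_ball[of \<theta>' d0] by (rule_tac subsetD) auto
    define e where "e = min (fst \<theta>' - fst \<theta>) (snd \<theta>' - snd \<theta>)"
    have e0: "e > 0" unfolding e_def using lt by simp
    have "ball \<theta> e \<subseteq> ?S"
    proof
      fix \<eta> assume "\<eta> \<in> ball \<theta> e"
      hence dd: "dist \<theta> \<eta> < e" by simp
      have "fst \<eta> \<le> fst \<theta>'" using dist_fst_le[of \<theta> \<eta>] dd unfolding e_def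
        by (simp add: dist_real_def abs_le_iff)
      moreover have "snd \<eta> \<le> snd \<theta>'" using dist_snd_le[of \<theta> \<eta>] dd unfolding e_def
        by (simp add: dist_real_def abs_le_iff)
      ultimately have le: "Phi A (x1, x2) \<eta> j j' \<le> Phi A (x1, x2) \<theta>' j j'" for j j'
        by (rule Phi_mono)
      have "Phi A (x1, x2) \<theta>' j j' < Orderings.top" for j j' using fin by simp
      hence "Phi A (x1, x2) \<eta> j j' < Orderings.top" for j j' using le[of j j'] by (rule le_less_trans[rotated])
      thus "\<eta> \<in> ?S" by simp
    qed
    thus "\<theta> \<in> Dx A (x1, x2)" unfolding Dx_def mem_interior using e0 by blast
  qed
  with G show "Gamma A \<subseteq> Dx A (x1, x2) \<and> Dset A \<subseteq> Dx A (x1, x2)" by blast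
qed

end
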